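(* Let $M_\varphi$ be a hyperbolic once-punctured torus bundle with fibre $S$. For any irreducible representation $\rho\colon\pi_1(S)\to\mathrm{SL}(2,\mathbb{C})$ whose character $\chi_\rho$ lies in $X_\varphi(S)$, there exists $T\in\mathrm{SL}(2,\mathbb{C})$ such that $T^{-1}\rho(\gamma)T=\rho(\varphi(\gamma))$ for all $\gamma\in\pi_1(S)$. Moreover, $T$ is unique up to sign, and at least one of $\operatorname{tr}T$, $\operatorname{tr}(\rho(a)T)$, $\operatorname{tr}(\rho(b)T)$, $\operatorname{tr}(\rho(ab)T)$ is nonzero.
   Context: $\pi_1(S)$ is free on $a,b$ and $\varphi$ denotes the automorphism of $\pi_1(S)$ induced by the monodromy. $X(S)\cong\mathbb{C}^3$ is the $\mathrm{SL}(2,\mathbb{C})$-character variety of $\pi_1(S)$ with coordinates $(\operatorname{tr}\rho(a),\operatorname{tr}\rho(b),\operatorname{tr}\rho(ab))$, and $X_\varphi(S)=\{\chi\in X(S):\chi=\chi\circ\varphi\}$. *)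

theory Defs
  imports "HOL-Analysis.Analysis"
begin

datatype gen = Ga | Gb

text \<open>A letter is a generator together with an exponent sign: True = +1, False = -1.
  Elements of the free group pi_1(S) = F(a,b) are represented by words (lists of letters);
  two words represent the same element iff their free reductions agree.\<close>

type_synonym letter = "gen \<times> bool"
type_synonym word = "letter list"

definition inv_letter :: "letter \<Rightarrow> letter" where
  "inv_letter l = (fst l, \<not> snd l)"

definition inv_word :: "word \<Rightarrow> word" where
  "inv_word w = rev (map inv_letter w)"

fun fred :: "word \<Rightarrow> word" where
  "fred [] = []"
| "fred (x # xs) = (case fred xs of
      [] \<Rightarrow> [x]
    | y # ys \<Rightarrow> (if y = inv_letter x then ys else x # y # ys))"

definition word_a :: word where "word_a = [(Ga, True)]"
definition word_b :: word where "word_b = [(Gb, True)]"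

definition subst :: "word \<Rightarrow> word \<Rightarrow> word \<Rightarrow> word" where
  "subst wa wb w = concat (map (\<lambda>l. let img = (if fst l = Ga then wa else wb)
                                     in if snd l then img else inv_word img) w)"

definition is_free_aut :: "word \<Rightarrow> word \<Rightarrow> bool" where
  "is_free_aut wa wb \<longleftrightarrow> (\<exists>va vb.
      fred (subst wa wb va) = word_a \<and> fred (subst wa wb vb) = word_b \<and>
      fred (subst va vb wa) = word_a \<and> fred (subst va vb wb) = word_b)"

text \<open>Exponent sum of a generator in a word (abelianisation H_1(S) = Z^2).\<close>
definition expsum :: "gen \<Rightarrow> word \<Rightarrow> int" where
  "expsum g w = (\<Sum>l\<leftarrow>w. if fst l = g then (if snd l then 1 else -1) else 0)"

text \<open>The once-punctured torus bundle with monodromy inducing the automorphism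
  (a \<mapsto> wa, b \<mapsto> wb) is hyperbolic: the monodromy is orientation preserving
  (action on H_1 has determinant 1) and Anosov (|trace| > 2).\<close>
definition hyperbolic_monodromy :: "word \<Rightarrow> word \<Rightarrow> bool" where
  "hyperbolic_monodromy wa wb \<longleftrightarrow> is_free_aut wa wb \<and>
     expsum Ga wa * expsum Gb wb - expsum Gb wa * expsum Ga wb = 1 \<and>
     \<bar>expsum Ga wa + expsum Gb wb\<bar> > 2"

type_synonym mat2 = "complex^2^2"

definition SL2 :: "mat2 set" where
  "SL2 = {M. det M = 1}"

text \<open>A representation rho of F(a,b) is determined by rho(a) = A, rho(b) = B in SL(2,C).\<close>
definition rep_letter :: "mat2 \<Rightarrow> mat2 \<Rightarrow> letter \<Rightarrow> mat2" where
  "rep_letter A B l = (let M = (if fst l = Ga then A else B) in if snd l then M else matrix_inv M)"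

definition rep :: "mat2 \<Rightarrow> mat2 \<Rightarrow> word \<Rightarrow> mat2" where
  "rep A B w = foldr (\<lambda>l M. rep_letter A B l ** M) w (mat 1)"

definition irreducible_rep :: "mat2 \<Rightarrow> mat2 \<Rightarrow> bool" where
  "irreducible_rep A B \<longleftrightarrow>
     \<not> (\<exists>v::complex^2. v \<noteq> 0 \<and> (\<forall>w. \<exists>c::complex. rep A B w *v v = c *s v))"

text \<open>The character of rho lies in X_phi(S): chi_rho = chi_rho o phi.\<close>
definition char_fixed :: "word \<Rightarrow> word \<Rightarrow> mat2 \<Rightarrow> mat2 \<Rightarrow> bool" where
  "char_fixed wa wb A B \<longleftrightarrow> (\<forall>w. trace (rep A B w) = trace (rep A B (subst wa wb w)))"

end

theory Submission
  imports Defs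
begin

definition mk :: "complex \<Rightarrow> complex \<Rightarrow> complex \<Rightarrow> complex \<Rightarrow> mat2" where
  "mk a b c d = (\<chi> i j. if i = 1 then (if j = 1 then a else b) else (if j = 1 then c else d))"

definition v2 :: "complex \<Rightarrow> complex \<Rightarrow> complex^2" where
  "v2 p q = (\<chi> i. if i = 1 then p else q)"

lemma mk_nth [simp]: "mk a b c d $ 1 $ 1 = a" "mk a b c d $ 1 $ 2 = b" "mk a b c d $ 2 $ 1 = c" "mk a b c d $ 2 $ 2 = d"
  by (simp_all add: mk_def)

lemma v2_nth [simp]: "v2 p q $ 1 = p" "v2 p q $ 2 = q"
  by (simp_all add: v2_def)

lemma mk_eta: "M = mk (M$1$1) (M$1$2) (M$2$1) (M$2$2)"
  by (simp add: vec_eq_iff forall_2)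

lemma v2_eta: "v = v2 (v$1) (v$2)"
  by (simp add: vec_eq_iff forall_2)

lemma mk_eq [simp]: "mk a b c d = mk e f g h \<longleftrightarrow> a = e \<and> b = f \<and> c = g \<and> d = h"
  by (auto simp: vec_eq_iff forall_2)

lemma v2_eq [simp]: "v2 a b = v2 c d \<longleftrightarrow> a = c \<and> b = d"
  by (auto simp: vec_eq_iff forall_2)

lemma mk_mult [simp]: "mk a b c d ** mk e f g h = mk (a*e+b*g) (a*f+b*h) (c*e+d*g) (c*f+d*h)"
  by (simp add: vec_eq_iff forall_2 matrix_matrix_mult_def sum_2)

lemma mk_mulv [simp]: "mk a b c d *v v2 p q = v2 (a*p+b*q) (c*p+d*q)"
  by (simp add: vec_eq_iff forall_2 matrix_vector_mult_def sum_2)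

lemma det_mk [simp]: "det (mk a b c d) = a*d - b*c"
  by (simp add: det_2)

lemma trace_mk [simp]: "trace (mk a b c d) = a + d"
  by (simp add: trace_def sum_2)

lemma mat1_mk: "mat 1 = mk 1 0 0 1"
  by (simp add: vec_eq_iff forall_2 mat_def)

lemma uminus_mk [simp]: "- mk a b c d = mk (-a) (-b) (-c) (-d)"
  by (simp add: vec_eq_iff forall_2)

lemma scal_v2 [simp]: "c *s v2 p q = v2 (c*p) (c*q)"
  by (simp add: vec_eq_iff forall_2)

lemma zero_v2: "(0::complex^2) = v2 0 0"
  by (simp add: vec_eq_iff forall_2)

lemma mk_inv:
  assumes "a*d - b*c \<noteq> 0"
  shows "matrix_inv (mk a b c d) = mk (d/(a*d-b*c)) (-b/(a*d-b*c)) (-c/(a*d-b*c)) (a/(a*d-b*c))"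
proof -
  define k where "k = 1/(a*d-b*c)"
  have h: "(a*d-b*c)*k = 1" using assms by (simp add: k_def)
  let ?C = "mk (d*k) (-b*k) (-c*k) (a*k)"
  have 1: "mk a b c d ** ?C = mat 1"
    unfolding mat1_mk mk_mult mk_eq using h by (auto simp: algebra_simps)
  have 2: "?C ** mk a b c d = mat 1"
    unfolding mat1_mk mk_mult mk_eq using h by (auto simp: algebra_simps)
  have "matrix_inv (mk a b c d) = ?C" unfolding matrix_inv_def
  proof (rule some_equality)
    fix X assume X: "mk a b c d ** X = mat 1 \<and> X ** mk a b c d = mat 1"
    have "X = (?C ** mk a b c d) ** X" using 2 by simp
    also have "\<dots> = ?C" using X by (simp only: matrix_mul_assoc[symmetric]) simp
    finally show "X = ?C" .
  qed (use 1 2 in auto)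
  then show ?thesis by (simp add: k_def)
qed


lemma det_mult: "det ((M::mat2) ** N) = det M * det N"
proof -
  obtain a b c d where M: "M = mk a b c d" using mk_eta by blast
  obtain e f g h where N: "N = mk e f g h" using mk_eta by blast
  show ?thesis unfolding M N by (simp add: algebra_simps)
qed

lemma inv_ok:
  assumes "det (M::mat2) \<noteq> 0"
  shows "M ** matrix_inv M = mat 1" "matrix_inv M ** M = mat 1"
proof -
  obtain a b c d where M: "M = mk a b c d" using mk_eta by blast
  define k where "k = 1/(a*d-b*c)"
  have h: "(a*d-b*c)*k = 1" using assms M by (simp add: k_def)
  have i: "matrix_inv M = mk (d*k) (-b*k) (-c*k) (a*k)" using assms M by (simp add: mk_inv k_def)
  show "M ** matrix_inv M = mat 1" unfolding i unfolding M mat1_mk mk_mult mk_eq using h by (auto simp: algebra_simps)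
  show "matrix_inv M ** M = mat 1" unfolding i unfolding M mat1_mk mk_mult mk_eq using h by (auto simp: algebra_simps)
qed

lemma inv_unique:
  assumes "det (M::mat2) \<noteq> 0" "M ** X = mat 1"
  shows "matrix_inv M = X"
proof -
  have "matrix_inv M = matrix_inv M ** (M ** X)" using assms by simp
  also have "\<dots> = X" by (simp add: matrix_mul_assoc inv_ok[OF assms(1)])
  finally show ?thesis .
qed

lemma det_inv1: "det (M::mat2) = 1 \<Longrightarrow> det (matrix_inv M) = 1"
  using det_mult[of M "matrix_inv M"] inv_ok[of M] by (simp add: mat1_mk)

lemma inv_inv1: "det (M::mat2) = 1 \<Longrightarrow> matrix_inv (matrix_inv M) = M"
  by (rule inv_unique) (simp_all add: det_inv1 inv_ok)

lemma rep_Nil [simp]: "rep A B [] = mat 1"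
  by (simp add: rep_def)

lemma rep_Cons [simp]: "rep A B (l # w) = rep_letter A B l ** rep A B w"
  by (simp add: rep_def)

lemma rep_append: "rep A B (u @ v) = rep A B u ** rep A B v"
  by (induction u) (simp_all add: matrix_mul_assoc)

lemma rep_letter_det: "det A = 1 \<Longrightarrow> det B = 1 \<Longrightarrow> det (rep_letter A B l) = 1"
  by (simp add: rep_letter_def Let_def det_inv1)

lemma rep_det: "det A = 1 \<Longrightarrow> det B = 1 \<Longrightarrow> det (rep A B w) = 1"
  by (induction w) (simp_all add: det_mult rep_letter_det mat1_mk)

lemma rep_letter_inv: "det A = 1 \<Longrightarrow> det B = 1 \<Longrightarrow>
    rep_letter A B (inv_letter l) = matrix_inv (rep_letter A B l)"
  by (cases l) (auto simp: rep_letter_def inv_letter_def Let_def inv_inv1)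

lemma rep_letter_cancel: "det A = 1 \<Longrightarrow> det B = 1 \<Longrightarrow>
    rep_letter A B l ** rep_letter A B (inv_letter l) = mat 1"
  by (simp add: rep_letter_inv inv_ok rep_letter_det)

lemma rep_fred: "det A = 1 \<Longrightarrow> det B = 1 \<Longrightarrow> rep A B (fred w) = rep A B w"
proof (induction w)
  case Nil then show ?case by simp
next
  case (Cons x xs)
  show ?case
  proof (cases "fred xs")
    case Nil
    then show ?thesis using Cons by simp
  next
    case (Cons y ys)
    note IH = Cons.IH[OF Cons.prems]
    show ?thesis
    proof (cases "y = inv_letter x")
      case True
      have "rep A B (x # xs) = rep_letter A B x ** (rep_letter A B y ** rep A B ys)"
        using IH Cons by simp
      also have "\<dots> = rep A B ys" using True Cons.prems
        by (simp add: matrix_mul_assoc rep_letter_cancel)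
      finally show ?thesis using Cons True by simp
    next
      case False
      then show ?thesis using Cons IH by simp
    qed
  qed
qed

lemma inv_word_Cons: "inv_word (l # u) = inv_word u @ [inv_letter l]"
  by (simp add: inv_word_def)

lemma rep_inv_word_right: "det A = 1 \<Longrightarrow> det B = 1 \<Longrightarrow> rep A B u ** rep A B (inv_word u) = mat 1"
proof (induction u)
  case Nil then show ?case by (simp add: inv_word_def)
next
  case (Cons l u)
  have "rep A B (l # u) ** rep A B (inv_word (l # u)) =
        rep_letter A B l ** (rep A B u ** rep A B (inv_word u)) ** rep_letter A B (inv_letter l)"
    by (simp add: inv_word_Cons rep_append matrix_mul_assoc)
  then show ?case using Cons by (simp add: rep_letter_cancel)
qed

lemma rep_inv_word: "det A = 1 \<Longrightarrow> det B = 1 \<Longrightarrow> rep A B (inv_word u) = matrix_inv (rep A B u)"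
  by (rule inv_unique[symmetric]) (simp_all add: rep_det rep_inv_word_right)

lemma rep_subst: "det A = 1 \<Longrightarrow> det B = 1 \<Longrightarrow>
   rep A B (subst wa wb w) = rep (rep A B wa) (rep A B wb) w"
proof (induction w)
  case Nil then show ?case by (simp add: subst_def)
next
  case (Cons l w)
  have s: "subst wa wb (l # w) = (let img = (if fst l = Ga then wa else wb)
                                     in if snd l then img else inv_word img) @ subst wa wb w"
    by (simp add: subst_def)
  show ?case unfolding s rep_append using Cons
    by (auto simp: Let_def rep_letter_def rep_inv_word)
qed



definition commeig :: "mat2 \<Rightarrow> mat2 \<Rightarrow> bool" where
  "commeig A B \<longleftrightarrow> (\<exists>v. v \<noteq> 0 \<and> (\<exists>c. A *v v = c *s v) \<and> (\<exists>c. B *v v = c *s v))"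

lemma mulv_scal: "(M::mat2) *v (c *s v) = c *s (M *v v)"
proof -
  obtain a b c' d where M: "M = mk a b c' d" using mk_eta by blast
  obtain p q where v: "v = v2 p q" using v2_eta by blast
  show ?thesis unfolding M v by (simp add: algebra_simps)
qed

lemma inv_eig:
  assumes "det (M::mat2) = 1" "M *v v = c *s v"
  shows "\<exists>c'. matrix_inv M *v v = c' *s v"
proof -
  have "v = matrix_inv M *v (M *v v)"
    by (simp add: matrix_vector_mul_assoc inv_ok assms(1))
  also have "\<dots> = c *s (matrix_inv M *v v)" by (simp add: assms mulv_scal)
  finally have e: "v = c *s (matrix_inv M *v v)" .
  show ?thesis
  proof (cases "c = 0")
    case True
    then have "v = 0" using e by simp
    then show ?thesis by (intro exI[of _ 0]) simp
  next
    case False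
    have "(1/c) *s v = ((1/c)*c) *s (matrix_inv M *v v)" using e by (metis vector_smult_assoc)
    then have "matrix_inv M *v v = (1/c) *s v" using False by simp
    then show ?thesis by blast
  qed
qed

lemma eig_all:
  assumes "det A = 1" "det B = 1" "A *v v = c1 *s v" "B *v v = c2 *s v"
  shows "\<exists>c. rep A B w *v v = c *s v"
proof (induction w)
  case Nil then show ?case by (intro exI[of _ 1]) simp
next
  case (Cons l w)
  then obtain c where c: "rep A B w *v v = c *s v" by blast
  have "\<exists>c'. rep_letter A B l *v v = c' *s v"
    using assms inv_eig[of A v c1] inv_eig[of B v c2]
    by (cases l) (auto simp: rep_letter_def Let_def)
  then obtain c' where "rep_letter A B l *v v = c' *s v" by blast
  then have "rep A B (l # w) *v v = (c * c') *s v"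
    by (simp add: matrix_vector_mul_assoc[symmetric] c mulv_scal vector_smult_assoc mult.commute)
  then show ?case by blast
qed

lemma irr_nocommeig:
  assumes "det A = 1" "det B = 1" "irreducible_rep A B"
  shows "\<not> commeig A B"
  using assms eig_all unfolding commeig_def irreducible_rep_def by blast

lemma rep_word_a: "rep A B word_a = A" by (simp add: word_a_def rep_letter_def)
lemma rep_word_b: "rep A B word_b = B" by (simp add: word_b_def rep_letter_def)

lemma irr_prime:
  assumes "det A = 1" "det B = 1" "irreducible_rep A B" "is_free_aut wa wb"
  shows "\<not> commeig (rep A B wa) (rep A B wb)"
proof
  assume "commeig (rep A B wa) (rep A B wb)"
  then obtain v c1 c2 where v: "v \<noteq> 0" "rep A B wa *v v = c1 *s v" "rep A B wb *v v = c2 *s v"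
    unfolding commeig_def by blast
  obtain va vb where f: "fred (subst wa wb va) = word_a" "fred (subst wa wb vb) = word_b"
    using assms(4) unfolding is_free_aut_def by blast
  have d: "det (rep A B wa) = 1" "det (rep A B wb) = 1" using assms rep_det by auto
  have "A = rep A B (fred (subst wa wb va))" using f rep_word_a by simp
  also have "\<dots> = rep (rep A B wa) (rep A B wb) va" using assms by (simp add: rep_fred rep_subst)
  finally have eA: "A = rep (rep A B wa) (rep A B wb) va" .
  have "B = rep A B (fred (subst wa wb vb))" using f rep_word_b by simp
  also have "\<dots> = rep (rep A B wa) (rep A B wb) vb" using assms by (simp add: rep_fred rep_subst)
  finally have eB: "B = rep (rep A B wa) (rep A B wb) vb" .
  have "\<exists>c. A *v v = c *s v" using eig_all[OF d v(2,3)] eA by metis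
  moreover have "\<exists>c. B *v v = c *s v" using eig_all[OF d v(2,3)] eB by metis
  ultimately show False using irr_nocommeig[OF assms(1-3)] v(1) unfolding commeig_def by blast
qed


lemma minus_mk [simp]: "mk a b c d - mk e f g h = mk (a-e) (b-f) (c-g) (d-h)"
  by (simp add: vec_eq_iff forall_2)

lemma mat_mk: "mat x = mk x 0 0 x"
  by (simp add: vec_eq_iff forall_2 mat_def)

lemma par_lemma:
  assumes "(q::complex^2) \<noteq> 0" "p$1*q$2 - p$2*q$1 = 0"
  shows "\<exists>c. p = c *s q"
proof -
  obtain p1 p2 where p: "p = v2 p1 p2" using v2_eta by blast
  obtain q1 q2 where q: "q = v2 q1 q2" using v2_eta by blast
  have h: "p1*q2 = p2*q1" using assms(2) p q by simp
  show ?thesis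
  proof (cases "q1 = 0")
    case False
    have "p = (p1/q1) *s q" using False h unfolding p q by (simp add: field_simps)
    then show ?thesis by blast
  next
    case True
    then have "q2 \<noteq> 0" using assms(1) q by (auto simp: zero_v2)
    have "p = (p2/q2) *s q" using True \<open>q2 \<noteq> 0\<close> h unfolding p q by (simp add: field_simps)
    then show ?thesis by blast
  qed
qed

lemma kernel:
  assumes "det (M::mat2) = 0"
  shows "\<exists>v. v \<noteq> 0 \<and> M *v v = 0"
proof -
  obtain a b c d where M: "M = mk a b c d" using mk_eta by blast
  have h: "a*d = b*c" using assms M by simp
  show ?thesis
  proof (cases "a = 0 \<and> b = 0")
    case True
    show ?thesis
    proof (cases "c = 0 \<and> d = 0")
      case True
      then show ?thesis using \<open>a = 0 \<and> b = 0\<close> M by (intro exI[of _ "v2 1 0"]) (simp add: zero_v2)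
    next
      case False
      then show ?thesis using \<open>a = 0 \<and> b = 0\<close> M by (intro exI[of _ "v2 d (-c)"]) (auto simp: zero_v2 mult.commute)
    qed
  next
    case False
    then show ?thesis using h M by (intro exI[of _ "v2 b (-a)"]) (auto simp: zero_v2 mult.commute)
  qed
qed

lemma eig_of_root:
  assumes "\<mu>^2 - trace (M::mat2) * \<mu> + det M = 0"
  shows "\<exists>v. v \<noteq> 0 \<and> M *v v = \<mu> *s v"
proof -
  obtain a b c d where M: "M = mk a b c d" using mk_eta by blast
  have "det (mk (a-\<mu>) b c (d-\<mu>)) = 0" using assms M by (simp add: algebra_simps power2_eq_square)
  then obtain v where v: "v \<noteq> 0" "mk (a-\<mu>) b c (d-\<mu>) *v v = 0" using kernel by blast
  obtain p q where vv: "v = v2 p q" using v2_eta by blast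
  have "M *v v = \<mu> *s v" using v(2) unfolding M vv zero_v2 by (simp add: algebra_simps)
  then show ?thesis using v by blast
qed

lemma root_exists: "\<exists>\<mu>::complex. \<mu>^2 - t * \<mu> + D = 0"
proof -
  define s where "s = csqrt (t^2 - 4*D)"
  have hs: "s^2 = t^2 - 4*D" by (simp add: s_def)
  define \<mu> where "\<mu> = (t + s)/2"
  have hm: "2*\<mu> = t + s" by (simp add: \<mu>_def)
  have "\<mu>^2 - t * \<mu> + D = 0" using hs hm by algebra
  then show ?thesis by blast
qed

lemma commutant:
  assumes "(D::mat2) \<noteq> 0" "det D = 0" "A ** D = D ** A" "B ** D = D ** B"
  shows "commeig A B"
proof -
  obtain d1 d2 d3 d4 where Dm: "D = mk d1 d2 d3 d4" using mk_eta by blast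
  have hd: "d1*d4 - d2*d3 = 0" using assms(2) Dm by simp
  obtain e where e: "D *v e \<noteq> 0"
  proof (cases "D *v v2 1 0 = 0")
    case True
    have "D *v v2 0 1 \<noteq> 0"
    proof
      assume "D *v v2 0 1 = 0"
      then have "D = 0" using True unfolding Dm zero_v2 by (simp add: vec_eq_iff forall_2)
      then show False using assms(1) by simp
    qed
    then show ?thesis using that by blast
  next
    case False
    then show ?thesis using that by blast
  qed
  define u where "u = D *v e"
  have par: "\<exists>c. D *v y = c *s u" for y
  proof (rule par_lemma)
    show "u \<noteq> 0" using e u_def by simp
    obtain y1 y2 where y: "y = v2 y1 y2" using v2_eta by blast
    obtain e1 e2 where ee: "e = v2 e1 e2" using v2_eta by blast
    have "(d1 * y1 + d2 * y2) * (d3 * e1 + d4 * e2) - (d3 * y1 + d4 * y2) * (d1 * e1 + d2 * e2)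
       = (d1*d4 - d2*d3) * (y1*e2 - y2*e1)" by (simp add: algebra_simps)
    then have "(d1 * y1 + d2 * y2) * (d3 * e1 + d4 * e2) - (d3 * y1 + d4 * y2) * (d1 * e1 + d2 * e2) = 0"
      using hd by simp
    then show "(D *v y) $ 1 * u $ 2 - (D *v y) $ 2 * u $ 1 = 0"
      unfolding u_def Dm y ee by simp
  qed
  have comm: "\<exists>c. M *v u = c *s u" if "M ** D = D ** M" for M
  proof -
    have "M *v u = D *v (M *v e)"
      unfolding u_def by (simp add: matrix_vector_mul_assoc that)
    then show ?thesis using par by metis
  qed
  show ?thesis unfolding commeig_def using comm[OF assms(3)] comm[OF assms(4)] e u_def by blast
qed

lemma comm_shift:
  assumes "(A::mat2) ** S = S ** A"
  shows "A ** (S - mat x) = (S - mat x) ** A"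
proof -
  obtain a b c d where Am: "A = mk a b c d" using mk_eta by blast
  obtain e f g h where Sm: "S = mk e f g h" using mk_eta by blast
  have 1: "A ** (S - mat x) = A ** S - mat x ** A" unfolding Am Sm mat_mk by (simp add: algebra_simps)
  have 2: "(S - mat x) ** A = S ** A - mat x ** A" unfolding Am Sm mat_mk by (simp add: algebra_simps)
  show ?thesis unfolding 1 2 assms ..
qed

lemma schur:
  assumes "det S = 1" "A ** S = S ** A" "B ** S = S ** B" "\<not> commeig A B"
  shows "S = mat 1 \<or> S = - mat 1"
proof -
  obtain \<mu> where mu: "\<mu>^2 - trace S * \<mu> + det S = 0" using root_exists by blast
  define D where "D = S - mat \<mu>"
  obtain e f g h where Sm: "S = mk e f g h" using mk_eta by blast
  have "det D = 0" using mu unfolding D_def Sm mat_mk by (simp add: algebra_simps power2_eq_square)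
  then have "D = 0" using commutant[of D A B] comm_shift assms D_def by blast
  then have S: "S = mat \<mu>" unfolding D_def by simp
  then have "\<mu>^2 = 1" using assms(1) by (simp add: mat_mk power2_eq_square)
  then have "\<mu> = 1 \<or> \<mu> = -1" by (simp add: power2_eq_1_iff)
  then show ?thesis using S by (auto simp: mat_mk)
qed


lemma nf_coords1:
  "a*d - b*c = 1 \<Longrightarrow>
   mk a b c d ** mk p (a*p+b*q) q (c*p+d*q) = mk p (a*p+b*q) q (c*p+d*q) ** mk 0 (-1) 1 (a+d)"
  unfolding mk_mult mk_eq apply (intro conjI) 
  apply simp
  apply algebra
  apply simp
  apply algebra
  done

lemma nf_coords2:
  "e*p + f*q = \<mu>*p \<Longrightarrow> g*p + h*q = \<mu>*q \<Longrightarrow>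
   mk e f g h ** mk p (a*p+b*q) q (c*p+d*q) = mk p (a*p+b*q) q (c*p+d*q) **
     mk \<mu> ((a+d)*\<mu> + ((a*e+b*g) + (c*f+d*h)) - (a+d)*(e+h)) 0 ((e+h) - \<mu>)"
  unfolding mk_mult mk_eq apply (intro conjI) 
  apply algebra
  apply algebra
  apply algebra
  apply algebra
  done

definition NF :: "complex \<Rightarrow> complex \<Rightarrow> complex \<Rightarrow> complex \<Rightarrow> mat2" where
  "NF x y z \<mu> = mk \<mu> (x*\<mu> + z - x*y) 0 (y - \<mu>)"

lemma normal_form:
  assumes "det A = 1" "det B = 1" "\<not> commeig A B" "\<mu>^2 - trace B * \<mu> + 1 = 0"
  shows "\<exists>P. det P \<noteq> 0 \<and> A ** P = P ** mk 0 (-1) 1 (trace A) \<and>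
             B ** P = P ** NF (trace A) (trace B) (trace (A ** B)) \<mu>"
proof -
  obtain v where v: "v \<noteq> 0" "B *v v = \<mu> *s v" using eig_of_root[of \<mu> B] assms by auto
  obtain a b c d where Am: "A = mk a b c d" using mk_eta by blast
  obtain e f g h where Bm: "B = mk e f g h" using mk_eta by blast
  obtain p q where vm: "v = v2 p q" using v2_eta by blast
  define P where "P = mk p (a*p+b*q) q (c*p+d*q)"
  have hA: "a*d - b*c = 1" using assms Am by simp
  have hB: "e*p + f*q = \<mu>*p" "g*p + h*q = \<mu>*q" using v(2) Bm vm by simp_all
  have "det P \<noteq> 0"
  proof
    assume "det P = 0"
    then have "(A *v v)$1 * v$2 - (A *v v)$2 * v$1 = 0" unfolding P_def Am vm by (simp add: algebra_simps)
    then obtain c' where "A *v v = c' *s v" using par_lemma v(1) by blast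
    then show False using assms(3) v unfolding commeig_def by blast
  qed
  moreover have "A ** P = P ** mk 0 (-1) 1 (trace A)" unfolding P_def Am using nf_coords1[OF hA] by simp
  moreover have "B ** P = P ** NF (trace A) (trace B) (trace (A ** B)) \<mu>"
    unfolding P_def Am Bm NF_def using nf_coords2[OF hB, of a b c d] by (simp add: algebra_simps)
  ultimately show ?thesis by blast
qed


lemma transfer_commeig:
  assumes "det P \<noteq> 0" "A ** P = P ** C" "B ** P = P ** N" "commeig C N"
  shows "commeig A B"
proof -
  obtain v c1 c2 where v: "v \<noteq> 0" "C *v v = c1 *s v" "N *v v = c2 *s v"
    using assms(4) unfolding commeig_def by blast
  have "P *v v \<noteq> 0"
  proof
    assume "P *v v = 0"
    then have "matrix_inv P *v (P *v v) = 0" by simp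
    then have "v = 0" by (simp add: matrix_vector_mul_assoc inv_ok assms(1))
    then show False using v by simp
  qed
  moreover have "A *v (P *v v) = c1 *s (P *v v)"
    by (simp add: matrix_vector_mul_assoc assms(2)) (simp add: matrix_vector_mul_assoc[symmetric] v mulv_scal)
  moreover have "B *v (P *v v) = c2 *s (P *v v)"
    by (simp add: matrix_vector_mul_assoc assms(3)) (simp add: matrix_vector_mul_assoc[symmetric] v mulv_scal)
  ultimately show ?thesis unfolding commeig_def by blast
qed

lemma Q_nonzero:
  assumes "\<not> commeig (mk 0 (-1) 1 x) (NF x y z \<mu>)"
  shows "(2*\<mu>-y)^2 - x*(x*\<mu>+z-x*y)*(2*\<mu>-y) + (x*\<mu>+z-x*y)^2 \<noteq> 0"
proof
  define k where "k = x*\<mu>+z-x*y"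
  define m where "m = y - \<mu>"
  have dm: "2*\<mu>-y = \<mu> - m" by (simp add: m_def)
  assume "(2*\<mu>-y)^2 - x*(x*\<mu>+z-x*y)*(2*\<mu>-y) + (x*\<mu>+z-x*y)^2 = 0"
  then have Q: "(\<mu>-m)^2 - x*k*(\<mu>-m) + k^2 = 0" unfolding dm k_def by simp
  have N: "NF x y z \<mu> = mk \<mu> k 0 m" by (simp add: NF_def k_def m_def)
  show False
  proof (cases "k = 0")
    case True
    then have "(\<mu>-m)^2 = 0" using Q by simp
    then have "m = \<mu>" by simp
    obtain l where l: "l^2 - x*l + 1 = 0" using root_exists by blast
    then obtain v where v: "v \<noteq> 0" "mk 0 (-1) 1 x *v v = l *s v"
      using eig_of_root[of l "mk 0 (-1) 1 x"] by auto
    obtain p q where vm: "v = v2 p q" using v2_eta by blast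
    have "NF x y z \<mu> *v v = \<mu> *s v" unfolding N True \<open>m = \<mu>\<close> vm by simp
    then show False using assms v unfolding commeig_def by blast
  next
    case False
    define l where "l = (\<mu>-m)/k"
    have kl: "k*l = \<mu> - m" using False by (simp add: l_def)
    have "k^2 * (l^2 - x*l + 1) = 0" using Q kl by algebra
    then have l: "l^2 - x*l + 1 = 0" using False by simp
    have "mk 0 (-1) 1 x *v v2 1 (-l) = l *s v2 1 (-l)"
      using l by (simp add: algebra_simps power2_eq_square)
    moreover have "NF x y z \<mu> *v v2 1 (-l) = m *s v2 1 (-l)"
      unfolding N using kl by (simp add: algebra_simps)
    moreover have "v2 1 (-l) \<noteq> 0" by (simp add: zero_v2)
    ultimately show False using assms unfolding commeig_def by blast
  qed
qed


lemma trace_coords: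
  assumes "(2*\<mu>-y)^2 - x*(x*\<mu>+z-x*y)*(2*\<mu>-y) + (x*\<mu>+z-x*y)^2 \<noteq> 0"
    and "trace X = 0" "trace (mk 0 (-1) 1 x ** X) = 0" "trace (NF x y z \<mu> ** X) = 0"
    "trace (mk 0 (-1) 1 x ** NF x y z \<mu> ** X) = 0"
  shows "det X = 0"
proof -
  obtain x1 x2 x3 x4 where Xm: "X = mk x1 x2 x3 x4" using mk_eta by blast
  have h1: "x1 + x4 = 0" using assms(2) Xm by simp
  have h2: "- x3 + x2 + x * x4 = 0" using assms(3) Xm by (auto simp: algebra_simps)
  have h3: "\<mu> * x1 + (x*\<mu>+z-x*y) * x3 + (y - \<mu>) * x4 = 0" using assms(4) Xm by (simp add: NF_def)
  have h4: "- (y-\<mu>) * x3 + \<mu> * x2 + ((x*\<mu>+z-x*y) + x*(y-\<mu>)) * x4 = 0"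
    using assms(5) Xm by (simp add: NF_def algebra_simps)
  have "((2*\<mu>-y)^2 - x*(x*\<mu>+z-x*y)*(2*\<mu>-y) + (x*\<mu>+z-x*y)^2) * x1 = 0"
    using h1 h2 h3 h4 by algebra
  then have "x1 = 0" using assms(1) by simp
  have "((2*\<mu>-y)^2 - x*(x*\<mu>+z-x*y)*(2*\<mu>-y) + (x*\<mu>+z-x*y)^2) * x3 = 0"
    using h1 h2 h3 h4 by algebra
  then have "x3 = 0" using assms(1) by simp
  show ?thesis using Xm \<open>x3 = 0\<close> \<open>x1 = 0\<close> by simp
qed

lemma trace_conj:
  fixes P M M' T :: mat2
  assumes "det P \<noteq> 0" "M ** P = P ** M'"
  shows "trace (M ** T) = trace (M' ** (matrix_inv P ** T ** P))"
proof -
  have "matrix_inv P ** M ** P = matrix_inv P ** (P ** M')"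
    by (simp add: matrix_mul_assoc[symmetric] assms(2))
  also have "\<dots> = M'" by (simp add: matrix_mul_assoc inv_ok(2)[OF assms(1)])
  finally have "M' = matrix_inv P ** M ** P" by simp
  then have "M' ** (matrix_inv P ** T ** P) = matrix_inv P ** ((M ** T) ** P)"
    by (simp add: matrix_mul_assoc) (simp add: matrix_mul_assoc[symmetric] inv_ok assms(1))
  then show ?thesis
    by (simp add: trace_mul_sym[of "matrix_inv P"]) (simp add: matrix_mul_assoc[symmetric] inv_ok assms(1))
qed

lemma trace_nonzero:
  assumes "det P \<noteq> 0" "A ** P = P ** mk 0 (-1) 1 x" "B ** P = P ** NF x y z \<mu>"
    "(2*\<mu>-y)^2 - x*(x*\<mu>+z-x*y)*(2*\<mu>-y) + (x*\<mu>+z-x*y)^2 \<noteq> 0" "det T = 1"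
  shows "trace T \<noteq> 0 \<or> trace (A ** T) \<noteq> 0 \<or> trace (B ** T) \<noteq> 0 \<or> trace (A ** B ** T) \<noteq> 0"
proof (rule ccontr)
  assume "\<not> ?thesis"
  then have t: "trace T = 0" "trace (A ** T) = 0" "trace (B ** T) = 0" "trace (A ** B ** T) = 0" by auto
  define X where "X = matrix_inv P ** T ** P"
  have AB: "(A ** B) ** P = P ** (mk 0 (-1) 1 x ** NF x y z \<mu>)"
    by (simp add: matrix_mul_assoc[symmetric] assms(3)) (simp add: matrix_mul_assoc assms(2))
  have "trace X = 0" using trace_conj[OF assms(1), of "mat 1" "mat 1" T] t by (simp add: X_def)
  moreover have "trace (mk 0 (-1) 1 x ** X) = 0" using trace_conj[OF assms(1,2), of T] t by (simp add: X_def)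
  moreover have "trace (NF x y z \<mu> ** X) = 0" using trace_conj[OF assms(1,3), of T] t by (simp add: X_def)
  moreover have "trace (mk 0 (-1) 1 x ** NF x y z \<mu> ** X) = 0"
    using trace_conj[OF assms(1) AB, of T] t by (simp add: X_def)
  ultimately have "det X = 0" using trace_coords[OF assms(4)] by blast
  moreover have "det X = 1"
  proof -
    have "det X = det (matrix_inv P) * det P * det T" by (simp add: X_def det_mult)
    also have "det (matrix_inv P) * det P = 1"
      using det_mult[of "matrix_inv P" P] inv_ok[OF assms(1)] by (simp add: mat1_mk)
    finally show ?thesis using assms(5) by simp
  qed
  ultimately show False by simp
qed


lemma intertwine_inv:
  fixes Q M M' :: mat2
  assumes "det Q \<noteq> 0" "M ** Q = Q ** M'"
  shows "matrix_inv Q ** M = M' ** matrix_inv Q"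
proof -
  have "matrix_inv Q ** M = matrix_inv Q ** (M ** Q) ** matrix_inv Q"
    by (simp add: matrix_mul_assoc[symmetric] inv_ok(1)[OF assms(1)])
  also have "\<dots> = M' ** matrix_inv Q"
    by (simp add: assms(2) matrix_mul_assoc inv_ok(2)[OF assms(1)])
  finally show ?thesis .
qed

lemma conj_letter:
  fixes T A B A' B' :: mat2
  assumes "det T \<noteq> 0" "det A = 1" "det B = 1" "det A' = 1" "det B' = 1"
    "A ** T = T ** A'" "B ** T = T ** B'"
  shows "rep_letter A B l ** T = T ** rep_letter A' B' l"
proof -
  have i: "matrix_inv M ** T = T ** matrix_inv M'" if "det M = 1" "det M' = 1" "M ** T = T ** M'" for M M' :: mat2
  proof -
    have "T ** M' ** matrix_inv M' = M ** T ** matrix_inv M'" using that(3) by simp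
    then have "T = M ** T ** matrix_inv M'" by (simp add: matrix_mul_assoc[symmetric] inv_ok that)
    then have "matrix_inv M ** T = matrix_inv M ** M ** T ** matrix_inv M'"
      by (metis matrix_mul_assoc)
    then show ?thesis by (simp add: inv_ok that)
  qed
  show ?thesis using assms i[of A A'] i[of B B']
    by (cases l) (auto simp: rep_letter_def Let_def)
qed

lemma conj_rep:
  fixes T A B A' B' :: mat2
  assumes "det T \<noteq> 0" "det A = 1" "det B = 1" "det A' = 1" "det B' = 1"
    "A ** T = T ** A'" "B ** T = T ** B'"
  shows "rep A B w ** T = T ** rep A' B' w"
proof (induction w)
  case Nil then show ?case by simp
next
  case (Cons l w)
  have "rep A B (l # w) ** T = rep_letter A B l ** (rep A B w ** T)" by (simp add: matrix_mul_assoc)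
  also have "\<dots> = (rep_letter A B l ** T) ** rep A' B' w" by (simp add: Cons matrix_mul_assoc)
  also have "\<dots> = T ** rep A' B' (l # w)" by (simp add: conj_letter[OF assms] matrix_mul_assoc)
  finally show ?case .
qed

lemma mat_comm: "mat c ** (M::mat2) = M ** mat c"
proof -
  obtain a b c' d where M: "M = mk a b c' d" using mk_eta by blast
  show ?thesis unfolding M mat_mk by (simp add: algebra_simps)
qed

lemma neg_mat1: "(- mat 1) ** (M::mat2) = - M"
proof -
  obtain a b c' d where M: "M = mk a b c' d" using mk_eta by blast
  show ?thesis unfolding M mat1_mk by simp
qed

lemma rep_single_a: "rep A B [(Ga, True)] = A" by (simp add: rep_letter_def)
lemma rep_single_b: "rep A B [(Gb, True)] = B" by (simp add: rep_letter_def)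
lemma rep_ab: "rep A B [(Ga, True), (Gb, True)] = A ** B" by (simp add: rep_letter_def)

theorem lemma3p8:
  fixes wa wb :: word and A B :: mat2
  assumes "hyperbolic_monodromy wa wb"
    and "A \<in> SL2" and "B \<in> SL2"
    and "irreducible_rep A B"
    and "char_fixed wa wb A B"
  shows "\<exists>T \<in> SL2.
           (\<forall>w. matrix_inv T ** rep A B w ** T = rep A B (subst wa wb w)) \<and>
           (\<forall>T' \<in> SL2. (\<forall>w. matrix_inv T' ** rep A B w ** T' = rep A B (subst wa wb w))
                \<longrightarrow> T' = T \<or> T' = - T) \<and>
           (trace T \<noteq> 0 \<or> trace (A ** T) \<noteq> 0 \<or> trace (B ** T) \<noteq> 0 \<or> trace (A ** B ** T) \<noteq> 0)"
proof -
  have dA: "det A = 1" and dB: "det B = 1" using assms(2,3) by (auto simp: SL2_def)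
  have fa: "is_free_aut wa wb" using assms(1) by (simp add: hyperbolic_monodromy_def)
  define A' where "A' = rep A B wa"
  define B' where "B' = rep A B wb"
  have dA': "det A' = 1" and dB': "det B' = 1" using rep_det dA dB by (auto simp: A'_def B'_def)
  have rs: "rep A B (subst wa wb w) = rep A' B' w" for w
    using rep_subst[OF dA dB] by (simp add: A'_def B'_def)
  have nc: "\<not> commeig A B" using irr_nocommeig[OF dA dB assms(4)] .
  have nc': "\<not> commeig A' B'" using irr_prime[OF dA dB assms(4) fa] by (simp add: A'_def B'_def)
  have tr: "trace (rep A B w) = trace (rep A' B' w)" for w
    using assms(5) rs unfolding char_fixed_def by simp
  have tA: "trace A' = trace A" using tr[of "[(Ga, True)]"] by (simp add: rep_letter_def)
  have tB: "trace B' = trace B" using tr[of "[(Gb, True)]"] by (simp add: rep_letter_def)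
  have tAB: "trace (A' ** B') = trace (A ** B)" using tr[of "[(Ga, True), (Gb, True)]"] by (simp add: rep_letter_def)
  obtain \<mu> where mu: "\<mu>^2 - trace B * \<mu> + 1 = 0" using root_exists by blast
  define C where "C = mk 0 (-1) 1 (trace A)"
  define N where "N = NF (trace A) (trace B) (trace (A ** B)) \<mu>"
  obtain P where P: "det P \<noteq> 0" "A ** P = P ** C" "B ** P = P ** N"
    using normal_form[OF dA dB nc mu] by (auto simp: C_def N_def)
  obtain P' where P': "det P' \<noteq> 0" "A' ** P' = P' ** C" "B' ** P' = P' ** N"
    using normal_form[OF dA' dB' nc', of \<mu>] mu by (auto simp: C_def N_def tA tB tAB)
  define T0 where "T0 = P ** matrix_inv P'"
  have iP'1: "det (matrix_inv P') * det P' = 1"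
    using det_mult[of "matrix_inv P'" P'] inv_ok[OF P'(1)] by (simp add: mat1_mk)
  have dT0: "det T0 \<noteq> 0" unfolding T0_def det_mult using P(1) iP'1 by auto
  have AT0: "A ** T0 = T0 ** A'"
    unfolding T0_def by (simp add: matrix_mul_assoc[symmetric] intertwine_inv[OF P'(1,2)])
      (simp add: matrix_mul_assoc P(2))
  have BT0: "B ** T0 = T0 ** B'"
    unfolding T0_def by (simp add: matrix_mul_assoc[symmetric] intertwine_inv[OF P'(1,3)])
      (simp add: matrix_mul_assoc P(3))
  define s where "s = csqrt (det T0)"
  have s2: "s^2 = det T0" by (simp add: s_def)
  have s0: "s \<noteq> 0" using s2 dT0 by auto
  define T where "T = mat (1/s) ** T0"
  have dT: "det T = 1" unfolding T_def det_mult using s2 s0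
    by (simp add: mat_mk power2_eq_square dT0)
  have AT: "A ** T = T ** A'" unfolding T_def
    by (metis matrix_mul_assoc mat_comm AT0)
  have BT: "B ** T = T ** B'" unfolding T_def
    by (metis matrix_mul_assoc mat_comm BT0)
  have dT': "det T \<noteq> 0" using dT by simp
  have conj: "matrix_inv T ** rep A B w ** T = rep A B (subst wa wb w)" for w
  proof -
    have "matrix_inv T ** rep A B w ** T = matrix_inv T ** (T ** rep A' B' w)"
      by (simp add: matrix_mul_assoc[symmetric] conj_rep[OF dT' dA dB dA' dB' AT BT])
    also have "\<dots> = rep A' B' w" by (simp add: matrix_mul_assoc inv_ok(2)[OF dT'])
    finally show ?thesis using rs by simp
  qed
  have uniq: "T' = T \<or> T' = - T"
    if T'S: "T' \<in> SL2" and T'c: "\<forall>w. matrix_inv T' ** rep A B w ** T' = rep A B (subst wa wb w)" for T'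
  proof -
    have dT'': "det T' = 1" using T'S by (simp add: SL2_def)
    then have nz: "det T' \<noteq> 0" by simp
    have "matrix_inv T' ** A ** T' = A'" using T'c[rule_format, of word_a] by (simp add: rs rep_word_a)
    then have AT': "A ** T' = T' ** A'"
      by (metis (no_types, lifting) inv_ok(1)[OF nz] matrix_mul_assoc matrix_mul_lid)
    have "matrix_inv T' ** B ** T' = B'" using T'c[rule_format, of word_b] by (simp add: rs rep_word_b)
    then have BT': "B ** T' = T' ** B'"
      by (metis (no_types, lifting) inv_ok(1)[OF nz] matrix_mul_assoc matrix_mul_lid)
    define S where "S = T' ** matrix_inv T"
    have dS: "det S = 1" unfolding S_def det_mult using dT'' det_inv1[OF dT] by simp
    have AS: "A ** S = S ** A" unfolding S_def
      by (simp add: matrix_mul_assoc AT') (simp add: matrix_mul_assoc[symmetric] intertwine_inv[OF dT' AT])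
    have BS: "B ** S = S ** B" unfolding S_def
      by (simp add: matrix_mul_assoc BT') (simp add: matrix_mul_assoc[symmetric] intertwine_inv[OF dT' BT])
    have ST: "T' = S ** T" unfolding S_def by (simp add: matrix_mul_assoc[symmetric] inv_ok(2)[OF dT'])
    from schur[OF dS AS BS nc] show ?thesis
      using ST neg_mat1 by auto
  qed
  have ncCN: "\<not> commeig C N" using transfer_commeig[OF P] nc by blast
  have Q: "(2*\<mu>-trace B)^2 - trace A*(trace A*\<mu>+trace (A ** B)-trace A*trace B)*(2*\<mu>-trace B)
           + (trace A*\<mu>+trace (A ** B)-trace A*trace B)^2 \<noteq> 0"
    using Q_nonzero ncCN by (simp add: C_def N_def)
  have trn: "trace T \<noteq> 0 \<or> trace (A ** T) \<noteq> 0 \<or> trace (B ** T) \<noteq> 0 \<or> trace (A ** B ** T) \<noteq> 0"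
    using trace_nonzero[OF P(1) _ _ Q dT] P(2,3) by (simp add: C_def N_def)
  show ?thesis
    using dT conj uniq trn by (auto simp: SL2_def)
qed

end
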